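(* Let $\alpha\in(0,1)$, let $a<T$ and $\lambda$ be positive real numbers, let $u_a\in\mathbb{R}$, and let $f:[a,T]\times\mathbb{R}^{+}\to\mathbb{R}^{+*}$ be continuous. For a function $w$ on $[a,T]$ write $$g(t,w(t)):=\frac{\lambda f(t,w(t))}{\left(\int_a^T f(x,w(x))\,dx\right)^2}.$$ If $(v,M)\in C^{(\alpha)}([a,T],\mathbb{R})\times C^{(\alpha)}([a,T],[0,\infty))$ is a tube solution of the nonlocal conformable fractional thermistor problem $$u^{(\alpha)}(t)=g(t,u(t)),\quad t\in[a,T],\qquad u(a)=u_a,$$ then this problem has a solution $u\in C^{(\alpha)}([a,T],\mathbb{R})$ satisfying $|u(t)-v(t)|\le M(t)$ for all $t\in[a,T]$.
   Context: Conformable fractional derivative: for $\alpha\in(0,1)$ and $h:[0,\infty)\to\mathbb{R}$, $h^{(\alpha)}(t):=\lim_{\epsilon\to0}\frac{h(t+\epsilon t^{1-\alpha})-h(t)}{\epsilon}$ for $t>0$; $h$ is $\alpha$-differentiable if this limit exists. $C^{(\alpha)}([a,T],X)$ denotes the set of functions $[a,T]\to X$ that are $\alpha$-differentiable with continuous $\alpha$-derivative. A pair $(v,M)\in C^{(\alpha)}([a,T],\mathbb{R})\times C^{(\alpha)}([a,T],[0,\infty))$ is a tube solution of $u^{(\alpha)}=g(t,u(t))$, $u(a)=u_a$, if: (i) $(y(t)-v(t))\,(g(t,y(t))-v^{(\alpha)}(t))\le M(t)M^{(\alpha)}(t)$ for every $t\in[a,T]$ and every function $y$ with $|y(t)-v(t)|=M(t)$;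 (ii) $v^{(\alpha)}(t)=g(t,v(t))$ and $M^{(\alpha)}(t)=0$ for all $t\in[a,T]$ with $M(t)=0$; (iii) $|u_a-v(a)|\le M(a)$.
   Formalization: f is continuous with strictly positive values on $[a,T]\times\mathbb{R}$ rather than a map $[a,T]\times\mathbb{R}^{+}\to\mathbb{R}^{+*}$, and in tube condition (i) y ranges only over functions continuous on $[a,T]$. Apart from conventions, each condition added here is assumed in the paper as well or is needed for the statement above to hold. *)

theory Defs
  imports "HOL-Analysis.Analysis"
begin

definition has_conf_deriv :: "real \<Rightarrow> (real \<Rightarrow> real) \<Rightarrow> real \<Rightarrow> real set \<Rightarrow> real \<Rightarrow> bool" where
  "has_conf_deriv \<alpha> h D S t \<longleftrightarrow>
     ((\<lambda>\<epsilon>. (h (t + \<epsilon> * t powr (1 - \<alpha>)) - h t) / \<epsilon>) \<longlongrightarrow> D)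
       (at 0 within {\<epsilon>. t + \<epsilon> * t powr (1 - \<alpha>) \<in> S})"

definition conf_deriv :: "real \<Rightarrow> real set \<Rightarrow> (real \<Rightarrow> real) \<Rightarrow> real \<Rightarrow> real" where
  "conf_deriv \<alpha> S h t =
     Lim (at 0 within {\<epsilon>. t + \<epsilon> * t powr (1 - \<alpha>) \<in> S})
         (\<lambda>\<epsilon>. (h (t + \<epsilon> * t powr (1 - \<alpha>)) - h t) / \<epsilon>)"

definition conf_C :: "real \<Rightarrow> real \<Rightarrow> real \<Rightarrow> real set \<Rightarrow> (real \<Rightarrow> real) \<Rightarrow> bool" where
  "conf_C \<alpha> a T X h \<longleftrightarrow>
     (\<forall>t\<in>{a..T}. h t \<in> X) \<and>
     (\<forall>t\<in>{a..T}. \<exists>D. has_conf_deriv \<alpha> h D {a..T} t) \<and>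
     continuous_on {a..T} (conf_deriv \<alpha> {a..T} h)"

text \<open>Tube solution for u^(alpha) = G(t,u), u(a) = ua, where the right-hand side
  G u t may depend nonlocally on the whole function u.\<close>
definition tube_solution ::
  "real \<Rightarrow> real \<Rightarrow> real \<Rightarrow> ((real \<Rightarrow> real) \<Rightarrow> real \<Rightarrow> real) \<Rightarrow> real
     \<Rightarrow> (real \<Rightarrow> real) \<Rightarrow> (real \<Rightarrow> real) \<Rightarrow> bool" where
  "tube_solution \<alpha> a T G ua v M \<longleftrightarrow>
     conf_C \<alpha> a T UNIV v \<and> conf_C \<alpha> a T {0..} M \<and>
     (\<forall>t\<in>{a..T}. \<forall>y. continuous_on {a..T} y \<and> \<bar>y t - v t\<bar> = M t \<longrightarrow>
        (y t - v t) * (G y t - conf_deriv \<alpha> {a..T} v t)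
          \<le> M t * conf_deriv \<alpha> {a..T} M t) \<and>
     (\<forall>t\<in>{a..T}. M t = 0 \<longrightarrow>
        conf_deriv \<alpha> {a..T} v t = G v t \<and> conf_deriv \<alpha> {a..T} M t = 0) \<and>
     \<bar>ua - v a\<bar> \<le> M a"

definition thermistor_rhs ::
  "real \<Rightarrow> (real \<Rightarrow> real \<Rightarrow> real) \<Rightarrow> real \<Rightarrow> real \<Rightarrow> (real \<Rightarrow> real) \<Rightarrow> real \<Rightarrow> real" where
  "thermistor_rhs lam f a T w t =
     lam * f t (w t) / (integral {a..T} (\<lambda>x. f x (w x)))\<^sup>2"

end

theory Submission
  imports Defs "HOL-Complex_Analysis.Great_Picard"
begin

lemma lip_deriv:
  fixes f f' :: "real \<Rightarrow> real"
  assumes G: "finite G" and st: "s \<le> t" and c: "continuous_on {s..t} f"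
    and d: "\<And>x. x \<in> {s..t} - G \<Longrightarrow> (f has_real_derivative f' x) (at x)"
    and b: "\<And>x. x \<in> {s..t} - G \<Longrightarrow> \<bar>f' x\<bar> \<le> L" and L: "0 \<le> L"
  shows "\<bar>f t - f s\<bar> \<le> L * (t - s)"
proof -
  have "(f' has_integral (f t - f s)) {s..t}"
    by (rule fundamental_theorem_of_calculus_strong[OF G st])
       (auto simp: has_real_derivative_iff_has_vector_derivative[symmetric] d c)
  from has_integral_bound_real[OF L G this] b show ?thesis using st by simp
qed

lemma cell_sum:
  fixes c :: "nat \<Rightarrow> real"
  assumes d: "\<delta> > 0" and j: "j < N" and t1: "a + real j * \<delta> \<le> t" and t2: "t \<le> a + real (Suc j) * \<delta>"
  shows "(\<Sum>k<N. c k * max 0 (min \<delta> (t - (a + real k * \<delta>)))) = (\<Sum>k<j. c k * \<delta>) + c j * (t - (a + real j * \<delta>))"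
proof -
  have "(\<Sum>k<N. c k * max 0 (min \<delta> (t - (a + real k * \<delta>)))) =
        (\<Sum>k<N. (if k < j then c k * \<delta> else if k = j then c j * (t - (a + real j * \<delta>)) else 0))"
  proof (rule sum.cong[OF refl])
    fix k assume "k \<in> {..<N}"
    consider "k < j" | "k = j" | "k > j" by linarith
    then show "c k * max 0 (min \<delta> (t - (a + real k * \<delta>))) =
        (if k < j then c k * \<delta> else if k = j then c j * (t - (a + real j * \<delta>)) else 0)"
    proof cases
      case 1
      then have "(real k + 1) * \<delta> \<le> real j * \<delta>" using d by (intro mult_right_mono) auto
      then have "max 0 (min \<delta> (t - (a + real k * \<delta>))) = \<delta>" using t1 d by (simp add: algebra_simps)
      then show ?thesis using 1 by simp
    next
      case 2
      then show ?thesis using t1 t2 d by (simp add: algebra_simps)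
    next
      case 3
      then have "(real j + 1) * \<delta> \<le> real k * \<delta>" using d by (intro mult_right_mono) auto
      then have "max 0 (min \<delta> (t - (a + real k * \<delta>))) = 0" using t2 d by (simp add: algebra_simps)
      then show ?thesis using 3 by simp
    qed
  qed
  also have "\<dots> = (\<Sum>k\<in>{..<N} \<inter> {k. k < j}. c k * \<delta>) +
      (\<Sum>k\<in>{..<N} \<inter> - {k. k < j}. if k = j then c j * (t - (a + real j * \<delta>)) else 0)"
    by (rule sum.If_cases) simp
  also have "{..<N} \<inter> {k. k < j} = {..<j}" using j by auto
  also have "(\<Sum>k\<in>{..<N} \<inter> - {k. k < j}. if k = j then c j * (t - (a + real j * \<delta>)) else 0)
      = c j * (t - (a + real j * \<delta>))"
    using j by (subst sum.delta) auto
  finally show ?thesis .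
qed

definition eul_y :: "(real\<Rightarrow>real\<Rightarrow>real\<Rightarrow>real) \<Rightarrow> real \<Rightarrow> real \<Rightarrow> real \<Rightarrow> real \<Rightarrow> nat \<Rightarrow> real" where
  "eul_y H K a \<delta> u0 k = rec_nat u0 (\<lambda>i yi. yi + \<delta> * H K (a + real i * \<delta>) yi) k"

lemma eul_y_0 [simp]: "eul_y H K a \<delta> u0 0 = u0"
  by (simp add: eul_y_def)

lemma eul_y_Suc [simp]: "eul_y H K a \<delta> u0 (Suc k) = eul_y H K a \<delta> u0 k + \<delta> * H K (a + real k * \<delta>) (eul_y H K a \<delta> u0 k)"
  by (simp add: eul_y_def)

definition eul_P :: "(real\<Rightarrow>real\<Rightarrow>real\<Rightarrow>real) \<Rightarrow> real \<Rightarrow> real \<Rightarrow> real \<Rightarrow> real \<Rightarrow> nat \<Rightarrow> real \<Rightarrow> real" where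
  "eul_P H K a \<delta> u0 N t = u0 + (\<Sum>k<N. H K (a + real k * \<delta>) (eul_y H K a \<delta> u0 k) * max 0 (min \<delta> (t - (a + real k * \<delta>))))"

lemma eul_y_sum: "eul_y H K a \<delta> u0 j = u0 + (\<Sum>k<j. H K (a + real k * \<delta>) (eul_y H K a \<delta> u0 k) * \<delta>)"
  by (induction j) (auto simp: algebra_simps)

lemma eul_P_cell:
  assumes "\<delta> > 0" "j < N" "a + real j * \<delta> \<le> t" "t \<le> a + real (Suc j) * \<delta>"
  shows "eul_P H K a \<delta> u0 N t = eul_y H K a \<delta> u0 j + H K (a + real j * \<delta>) (eul_y H K a \<delta> u0 j) * (t - (a + real j * \<delta>))"
  unfolding eul_P_def
  by (subst cell_sum[OF assms]) (simp add: eul_y_sum[of H K a \<delta> u0 j])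

lemma eul_P_a: "\<delta> > 0 \<Longrightarrow> eul_P H K a \<delta> u0 N a = u0"
  unfolding eul_P_def
proof -
  assume d: "\<delta> > 0"
  have "max 0 (min \<delta> (a - (a + real k * \<delta>))) = 0" for k
  proof -
    have h: "real k * \<delta> \<ge> 0" using d by simp
    have "a - (a + real k * \<delta>) \<le> 0" using h by linarith
    moreover have "a - (a + real k * \<delta>) \<le> \<delta>" using h d by linarith
    ultimately show ?thesis by (simp add: min_absorb2 max_absorb1)
  qed
  then show "u0 + (\<Sum>k<N. H K (a + real k * \<delta>) (eul_y H K a \<delta> u0 k) * max 0 (min \<delta> (a - (a + real k * \<delta>)))) = u0"
    by simp
qed

lemma eul_P_cont_t: "continuous_on S (eul_P H K a \<delta> u0 N)"
  unfolding eul_P_def by (intro continuous_intros)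

lemma eul_y_cont_K:
  assumes Hc: "continuous_on UNIV (\<lambda>z. H (fst z) (fst (snd z)) (snd (snd z)))"
  shows "continuous_on UNIV (\<lambda>K. eul_y H K a \<delta> u0 k)"
proof (induction k)
  case 0
  then show ?case by simp
next
  case (Suc k)
  have "continuous_on UNIV (\<lambda>K. H (fst (K, a + real k * \<delta>, eul_y H K a \<delta> u0 k))
     (fst (snd (K, a + real k * \<delta>, eul_y H K a \<delta> u0 k))) (snd (snd (K, a + real k * \<delta>, eul_y H K a \<delta> u0 k))))"
    by (rule continuous_on_compose2[OF Hc]) (auto intro!: continuous_intros Suc)
  then have "continuous_on UNIV (\<lambda>K. H K (a + real k * \<delta>) (eul_y H K a \<delta> u0 k))" by simp
  then show ?case by (simp add: Suc continuous_on_add continuous_on_mult_left)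
qed

lemma eul_P_cont_K:
  assumes Hc: "continuous_on UNIV (\<lambda>z. H (fst z) (fst (snd z)) (snd (snd z)))"
  shows "continuous_on UNIV (\<lambda>K. eul_P H K a \<delta> u0 N t)"
proof -
  have "continuous_on UNIV (\<lambda>K. H K (a + real k * \<delta>) (eul_y H K a \<delta> u0 k))" for k
  proof -
    have "continuous_on UNIV (\<lambda>K. H (fst (K, a + real k * \<delta>, eul_y H K a \<delta> u0 k))
       (fst (snd (K, a + real k * \<delta>, eul_y H K a \<delta> u0 k))) (snd (snd (K, a + real k * \<delta>, eul_y H K a \<delta> u0 k))))"
      by (rule continuous_on_compose2[OF Hc]) (auto intro!: continuous_intros eul_y_cont_K[OF Hc])
    then show ?thesis by simp
  qed
  then show ?thesis unfolding eul_P_def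
    by (intro continuous_on_add continuous_on_const continuous_on_sum continuous_on_mult_right) auto
qed

lemma cell_exists:
  assumes d: "\<delta> > 0" and N: "N > 0" and t: "a \<le> t" "t \<le> a + real N * \<delta>"
  shows "\<exists>j<N. a + real j * \<delta> \<le> t \<and> t \<le> a + real (Suc j) * \<delta>"
proof -
  define j where "j = min (N - 1) (nat \<lfloor>(t - a) / \<delta>\<rfloor>)"
  have q0: "0 \<le> (t - a) / \<delta>" using t d by simp
  have fl1: "real (nat \<lfloor>(t - a) / \<delta>\<rfloor>) \<le> (t - a) / \<delta>" using q0 by linarith
  have fl2: "(t - a) / \<delta> < real (nat \<lfloor>(t - a) / \<delta>\<rfloor>) + 1" using q0 by linarith
  have jN: "j < N" using N by (simp add: j_def)
  have "real j \<le> (t - a) / \<delta>" using fl1 by (simp add: j_def)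
  then have A: "a + real j * \<delta> \<le> t" using d by (simp add: le_divide_eq algebra_simps)
  have "(t - a) / \<delta> \<le> real j + 1"
  proof (cases "nat \<lfloor>(t - a) / \<delta>\<rfloor> \<le> N - 1")
    case True
    then show ?thesis using fl2 by (simp add: j_def)
  next
    case False
    then have "j = N - 1" by (simp add: j_def)
    moreover have "(t - a) / \<delta> \<le> real N" using t d by (simp add: divide_le_eq algebra_simps)
    ultimately show ?thesis using N by simp
  qed
  then have B: "t \<le> a + real (Suc j) * \<delta>" using d by (simp add: divide_le_eq algebra_simps)
  show ?thesis using jN A B by blast
qed

lemma open_cell_exists:
  assumes d: "\<delta> > 0" and N: "N > 0" and t: "a \<le> t" "t \<le> a + real N * \<delta>"
    and nG: "t \<notin> (\<lambda>k. a + real k * \<delta>) ` {..N}"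
  shows "\<exists>j<N. a + real j * \<delta> < t \<and> t < a + real (Suc j) * \<delta>"
proof -
  obtain j where j: "j < N" "a + real j * \<delta> \<le> t" "t \<le> a + real (Suc j) * \<delta>"
    using cell_exists[OF d N t] by blast
  have "t \<noteq> a + real j * \<delta>" using nG j by auto
  moreover have "t \<noteq> a + real (Suc j) * \<delta>" using nG j by (metis Suc_leI atMost_iff image_eqI)
  ultimately show ?thesis using j by force
qed

lemma eul_P_deriv:
  assumes d: "\<delta> > 0" and j: "j < N" and t: "a + real j * \<delta> < t" "t < a + real (Suc j) * \<delta>"
  shows "(eul_P H K a \<delta> u0 N has_real_derivative H K (a + real j * \<delta>) (eul_y H K a \<delta> u0 j)) (at t)"
proof -
  let ?c = "H K (a + real j * \<delta>) (eul_y H K a \<delta> u0 j)"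
  have "((\<lambda>t. eul_y H K a \<delta> u0 j + ?c * (t - (a + real j * \<delta>))) has_real_derivative ?c) (at t)"
    by (auto intro!: derivative_eq_intros)
  then show ?thesis
    by (rule has_field_derivative_transform_within_open[of _ _ _ "{a + real j * \<delta> <..< a + real (Suc j) * \<delta>}"])
       (use t in \<open>auto intro!: eul_P_cell[OF d j, symmetric]\<close>)
qed

lemma lip_deriv2:
  fixes f :: "real \<Rightarrow> real"
  assumes G: "finite G" and st: "s \<le> t" and c: "continuous_on {s..t} f"
    and d: "\<And>x. x \<in> {s..t} - G \<Longrightarrow> \<exists>D. (f has_real_derivative D) (at x) \<and> \<bar>D\<bar> \<le> L" and L: "0 \<le> L"
  shows "\<bar>f t - f s\<bar> \<le> L * (t - s)"
proof -
  define f' where "f' x = (SOME D. (f has_real_derivative D) (at x) \<and> \<bar>D\<bar> \<le> L)" for x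
  have *: "(f has_real_derivative f' x) (at x) \<and> \<bar>f' x\<bar> \<le> L" if "x \<in> {s..t} - G" for x
    unfolding f'_def by (rule someI_ex[OF d[OF that]])
  show ?thesis
    by (rule lip_deriv[OF G st c, of f']) (use * L in auto)
qed

lemma comp3_cont:
  assumes Hc: "continuous_on UNIV (\<lambda>z. H (fst z) (fst (snd z)) (snd (snd z)))"
    and "continuous_on S k" "continuous_on S p" "continuous_on S q"
  shows "continuous_on S (\<lambda>x. H (k x) (p x) (q x))"
proof -
  have "continuous_on S (\<lambda>x. H (fst (k x, p x, q x)) (fst (snd (k x, p x, q x))) (snd (snd (k x, p x, q x))))"
    by (rule continuous_on_compose2[OF Hc]) (auto intro!: continuous_intros assms)
  then show ?thesis by simp
qed

lemma eul_P_lip: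
  assumes d: "\<delta> > 0" and N: "N > 0" and B: "\<And>K s x. \<bar>H K s x\<bar> \<le> B"
    and st: "a \<le> s" "s \<le> t" "t \<le> a + real N * \<delta>"
  shows "\<bar>eul_P H K a \<delta> u0 N t - eul_P H K a \<delta> u0 N s\<bar> \<le> B * (t - s)"
proof (rule lip_deriv2[of "(\<lambda>k. a + real k * \<delta>) ` {..N}"])
  show "0 \<le> B" using B[of K a u0] by simp
  fix x assume x: "x \<in> {s..t} - (\<lambda>k. a + real k * \<delta>) ` {..N}"
  then obtain j where j: "j < N" "a + real j * \<delta> < x" "x < a + real (Suc j) * \<delta>"
    using open_cell_exists[OF d N, of a x] st by auto
  show "\<exists>D. (eul_P H K a \<delta> u0 N has_real_derivative D) (at x) \<and> \<bar>D\<bar> \<le> B"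
    using eul_P_deriv[OF d j] B by blast
qed (use st in \<open>auto intro: eul_P_cont_t\<close>)

lemma eul_err:
  assumes d: "\<delta> > 0" and N: "N > 0"
    and Hc: "continuous_on UNIV (\<lambda>z. H (fst z) (fst (snd z)) (snd (snd z)))"
    and w: "\<omega> \<ge> 0"
    and om: "\<And>j x. j < N \<Longrightarrow> a + real j * \<delta> < x \<Longrightarrow> x < a + real (Suc j) * \<delta> \<Longrightarrow>
       \<bar>H K (a + real j * \<delta>) (eul_y H K a \<delta> u0 j) - H K x (eul_P H K a \<delta> u0 N x)\<bar> \<le> \<omega>"
    and t: "a \<le> t" "t \<le> a + real N * \<delta>"
  shows "\<bar>eul_P H K a \<delta> u0 N t - u0 - integral {a..t} (\<lambda>s. H K s (eul_P H K a \<delta> u0 N s))\<bar> \<le> \<omega> * (t - a)"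
proof -
  define T where "T = a + real N * \<delta>"
  let ?P = "eul_P H K a \<delta> u0 N"
  let ?g = "\<lambda>s. H K s (?P s)"
  have gc: "continuous_on UNIV ?g"
    by (rule comp3_cont[OF Hc]) (auto intro!: continuous_intros eul_P_cont_t)
  have ider: "((\<lambda>x. integral {a..x} ?g) has_real_derivative ?g x) (at x within {a..T})" if "x \<in> {a..T}" for x
    by (rule integral_has_real_derivative[OF continuous_on_subset[OF gc] that]) auto
  have icont: "continuous_on {a..T} (\<lambda>x. integral {a..x} ?g)"
    unfolding continuous_on_eq_continuous_within
    using ider DERIV_continuous by blast
  define f where "f x = ?P x - integral {a..x} ?g" for x
  have "\<bar>f t - f a\<bar> \<le> \<omega> * (t - a)"
  proof (rule lip_deriv2[of "(\<lambda>k. a + real k * \<delta>) ` {..N}"])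
    show "continuous_on {a..t} f" unfolding f_def
      by (intro continuous_on_diff eul_P_cont_t continuous_on_subset[OF icont]) (use t T_def in auto)
    fix x assume x: "x \<in> {a..t} - (\<lambda>k. a + real k * \<delta>) ` {..N}"
    then obtain j where j: "j < N" "a + real j * \<delta> < x" "x < a + real (Suc j) * \<delta>"
      using open_cell_exists[OF d N, of a x] t by auto
    have "a \<in> (\<lambda>k. a + real k * \<delta>) ` {..N}" by (rule image_eqI[of _ _ 0]) auto
    then have xa: "a < x" using x by (cases "x = a") auto
    have "T \<in> (\<lambda>k. a + real k * \<delta>) ` {..N}" unfolding T_def by (rule image_eqI[of _ _ N]) auto
    then have xT: "x < T" using x t unfolding T_def by (cases "x = a + real N * \<delta>") auto
    have "((\<lambda>x. integral {a..x} ?g) has_real_derivative ?g x) (at x)"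
      using ider[of x] xa xT by (simp add: at_within_Icc_at)
    then have "(f has_real_derivative (H K (a + real j * \<delta>) (eul_y H K a \<delta> u0 j) - ?g x)) (at x)"
      unfolding f_def by (intro DERIV_diff eul_P_deriv[OF d j])
    then show "\<exists>D. (f has_real_derivative D) (at x) \<and> \<bar>D\<bar> \<le> \<omega>"
      using om[OF j] by blast
  qed (use t w in auto)
  moreover have "f a = u0" using d by (simp add: f_def eul_P_a)
  ultimately show ?thesis by (simp add: f_def)
qed

lemma dist_triple_le:
  fixes K x p y q :: real
  shows "dist (K, x, p) (K, y, q) \<le> \<bar>x - y\<bar> + \<bar>p - q\<bar>"
proof -
  have "dist (K, x, p) (K, y, q) = sqrt ((dist x y)\<^sup>2 + (dist p q)\<^sup>2)"
    by (simp add: dist_Pair_Pair)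
  also have "\<dots> \<le> \<bar>dist x y\<bar> + \<bar>dist p q\<bar>" by (rule sqrt_sum_squares_le_sum_abs)
  finally show ?thesis by (simp add: dist_real_def)
qed

lemma exist_nonlocal:
  fixes H :: "real \<Rightarrow> real \<Rightarrow> real \<Rightarrow> real" and \<Psi> :: "(real \<Rightarrow> real) \<Rightarrow> real"
  assumes aT: "a < T"
    and Hc: "continuous_on UNIV (\<lambda>z. H (fst z) (fst (snd z)) (snd (snd z)))"
    and Hb: "\<And>K s x. \<bar>H K s x\<bar> \<le> B"
    and \<Psi>r: "\<And>u. continuous_on {a..T} u \<Longrightarrow> K1 \<le> \<Psi> u \<and> \<Psi> u \<le> K2"
    and \<Psi>c: "\<And>U u. (\<And>n. continuous_on {a..T} (U n)) \<Longrightarrow> continuous_on {a..T} u \<Longrightarrow>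
              (\<And>x. x \<in> {a..T} \<Longrightarrow> (\<lambda>n. U n x) \<longlonglongrightarrow> u x) \<Longrightarrow> (\<lambda>n. \<Psi> (U n)) \<longlonglongrightarrow> \<Psi> u"
  shows "\<exists>u K. continuous_on {a..T} u \<and> K = \<Psi> u \<and>
           (\<forall>t\<in>{a..T}. u t = u0 + integral {a..t} (\<lambda>s. H K s (u s)))"
proof -
  have B0: "0 \<le> B" using Hb[of 0 0 0] by simp
  have K12: "K1 \<le> K2" using \<Psi>r[of "\<lambda>_. 0"] by simp
  define \<delta> where "\<delta> n = (T - a) / real (Suc n)" for n
  have \<delta>pos: "\<delta> n > 0" for n using aT by (simp add: \<delta>_def)
  have Tn: "a + real (Suc n) * \<delta> n = T" for n by (simp add: \<delta>_def)
  define P where "P n K = eul_P H K a (\<delta> n) u0 (Suc n)" for n K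
  have cP: "continuous_on {a..T} (P n K)" for n K unfolding P_def by (rule eul_P_cont_t)
  have fp: "\<exists>K. K1 \<le> K \<and> K \<le> K2 \<and> \<Psi> (P n K) = K" for n
  proof -
    have "continuous_on {K1..K2} (\<lambda>K. \<Psi> (P n K) - K)"
    proof (rule continuous_on_sequentiallyI)
      fix Ks K assume Ks: "\<forall>m. Ks m \<in> {K1..K2}" "K \<in> {K1..K2}" "Ks \<longlonglongrightarrow> K"
      have "(\<lambda>m. P n (Ks m) x) \<longlonglongrightarrow> P n K x" for x
        unfolding P_def
        by (rule continuous_on_tendsto_compose[OF eul_P_cont_K[OF Hc] Ks(3)]) auto
      then have "(\<lambda>m. \<Psi> (P n (Ks m))) \<longlonglongrightarrow> \<Psi> (P n K)" by (rule \<Psi>c[OF cP cP])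
      then show "(\<lambda>m. \<Psi> (P n (Ks m)) - Ks m) \<longlonglongrightarrow> \<Psi> (P n K) - K"
        using Ks(3) by (rule tendsto_diff)
    qed
    moreover have "\<Psi> (P n K2) - K2 \<le> 0" "0 \<le> \<Psi> (P n K1) - K1" using \<Psi>r[OF cP] by auto
    ultimately obtain K where "K1 \<le> K" "K \<le> K2" "\<Psi> (P n K) - K = 0"
      using IVT2'[of "\<lambda>K. \<Psi> (P n K) - K" K2 0 K1] K12 by blast
    then show ?thesis by auto
  qed
  then obtain Kn where Kn1: "\<And>n. K1 \<le> Kn n" and Kn2: "\<And>n. Kn n \<le> K2" and Knf: "\<And>n. \<Psi> (P n (Kn n)) = Kn n"
    by metis
  define F where "F n = P n (Kn n)" for n
  have Fc: "continuous_on {a..T} (F n)" for n unfolding F_def by (rule cP)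
  have Flip: "\<bar>F n t - F n s\<bar> \<le> B * (t - s)" if "a \<le> s" "s \<le> t" "t \<le> T" for n s t
    unfolding F_def P_def by (rule eul_P_lip[OF \<delta>pos _ Hb]) (use that Tn in auto)
  have Fa: "F n a = u0" for n unfolding F_def P_def by (rule eul_P_a[OF \<delta>pos])
  define R where "R = \<bar>u0\<bar> + B * (T - a)"
  have Fb: "\<bar>F n x\<bar> \<le> R" if "x \<in> {a..T}" for n x
  proof -
    have "\<bar>F n x - F n a\<bar> \<le> B * (x - a)" using Flip[of a x n] that by auto
    moreover have "B * (x - a) \<le> B * (T - a)" using that B0 by (intro mult_left_mono) auto
    ultimately show ?thesis using Fa[of n] by (simp add: R_def)
  qed
  obtain g k where gc: "continuous_on {a..T} g" and k: "strict_mono (k :: nat \<Rightarrow> nat)"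
    and unif: "\<And>e. 0 < e \<Longrightarrow> \<exists>N. \<forall>n x. n \<ge> N \<and> x \<in> {a..T} \<longrightarrow> norm (F (k n) x - g x) < e"
  proof (rule Arzela_Ascoli[of "{a..T}" F R])
    show "compact {a..T}" by simp
    show "\<And>n x. x \<in> {a..T} \<Longrightarrow> norm (F n x) \<le> R" using Fb by simp
    fix x e assume x: "x \<in> {a..T}" and e: "0 < (e::real)"
    show "\<exists>d>0. \<forall>n y. y \<in> {a..T} \<and> norm (x - y) < d \<longrightarrow> norm (F n x - F n y) < e"
    proof (intro exI[of _ "e / (B + 1)"] conjI allI impI)
      show "e / (B + 1) > 0" using e B0 by simp
      fix n y assume y: "y \<in> {a..T} \<and> norm (x - y) < e / (B + 1)"
      have "\<bar>F n x - F n y\<bar> \<le> B * \<bar>x - y\<bar>"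
      proof (cases "x \<le> y")
        case True then show ?thesis using Flip[of x y n] x y by (auto simp: abs_minus_commute)
      next
        case False then show ?thesis using Flip[of y x n] x y by auto
      qed
      also have "\<dots> \<le> B * (e / (B + 1))" using y B0 by (intro mult_left_mono) auto
      also have "\<dots> < e" using e B0 by (simp add: field_simps)
      finally show "norm (F n x - F n y) < e" by simp
    qed
  qed blast
  obtain K r where K: "K \<in> {K1..K2}" and r: "strict_mono (r :: nat \<Rightarrow> nat)"
    and Klim: "((Kn \<circ> k) \<circ> r) \<longlonglongrightarrow> K"
    using seq_compactE[OF compact_imp_seq_compact[OF compact_Icc], of "Kn \<circ> k" K1 K2] Kn1 Kn2 by auto
  define \<sigma> where "\<sigma> = k \<circ> r"
  have \<sigma>: "strict_mono \<sigma>" unfolding \<sigma>_def using k r by (rule strict_mono_o)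
  have \<sigma>ge: "m \<le> \<sigma> m" for m using seq_suble[OF \<sigma>] by simp
  have KL: "(\<lambda>m. Kn (\<sigma> m)) \<longlonglongrightarrow> K" using Klim by (simp add: \<sigma>_def comp_def)
  have FL: "(\<lambda>m. F (\<sigma> m) x) \<longlonglongrightarrow> g x" if x: "x \<in> {a..T}" for x
  proof (rule LIMSEQ_I)
    fix e :: real assume e: "0 < e"
    obtain N where N: "\<forall>n x. n \<ge> N \<and> x \<in> {a..T} \<longrightarrow> norm (F (k n) x - g x) < e"
      using unif[OF e] by blast
    show "\<exists>no. \<forall>m\<ge>no. norm (F (\<sigma> m) x - g x) < e"
    proof (intro exI allI impI)
      fix m assume "N \<le> m"
      then have "N \<le> r m" using seq_suble[OF r, of m] by simp
      then show "norm (F (\<sigma> m) x - g x) < e" using N x by (simp add: \<sigma>_def)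
    qed
  qed
  have Kg: "K = \<Psi> g"
  proof -
    have "(\<lambda>m. \<Psi> (F (\<sigma> m))) \<longlonglongrightarrow> \<Psi> g" by (rule \<Psi>c[OF Fc gc FL])
    moreover have "\<Psi> (F (\<sigma> m)) = Kn (\<sigma> m)" for m by (simp add: F_def Knf)
    ultimately have "(\<lambda>m. Kn (\<sigma> m)) \<longlonglongrightarrow> \<Psi> g" by simp
    then show ?thesis using KL LIMSEQ_unique by blast
  qed
  have inteq: "g t = u0 + integral {a..t} (\<lambda>s. H K s (g s))" if t: "t \<in> {a..T}" for t
  proof -
    have sub: "{a..t} \<subseteq> {a..T}" using t by auto
    have I1: "(\<lambda>m. integral {a..t} (\<lambda>s. H (Kn (\<sigma> m)) s (F (\<sigma> m) s))) \<longlonglongrightarrow> integral {a..t} (\<lambda>s. H K s (g s))"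
    proof (rule dominated_convergence(2)[where h="\<lambda>_. B"])
      fix m
      show "(\<lambda>s. H (Kn (\<sigma> m)) s (F (\<sigma> m) s)) integrable_on {a..t}"
        by (rule integrable_continuous_interval, rule comp3_cont[OF Hc])
           (auto intro!: continuous_intros continuous_on_subset[OF Fc sub])
    next
      show "(\<lambda>_. B) integrable_on {a..t}" by (rule integrable_continuous_interval[OF continuous_on_const])
    next
      fix m s show "norm (H (Kn (\<sigma> m)) s (F (\<sigma> m) s)) \<le> B" using Hb by simp
    next
      fix s assume s: "s \<in> {a..t}"
      have ic: "isCont (\<lambda>z. H (fst z) (fst (snd z)) (snd (snd z))) (K, s, g s)"
        using Hc by (simp add: continuous_on_eq_continuous_at)
      have "(\<lambda>m. (Kn (\<sigma> m), s, F (\<sigma> m) s)) \<longlonglongrightarrow> (K, s, g s)"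
        using sub s by (intro tendsto_Pair KL tendsto_const FL) auto
      from isCont_tendsto_compose[OF ic this]
      show "(\<lambda>m. H (Kn (\<sigma> m)) s (F (\<sigma> m) s)) \<longlonglongrightarrow> H K s (g s)" by simp
    qed
    have I2: "(\<lambda>m. F (\<sigma> m) t - u0 - integral {a..t} (\<lambda>s. H (Kn (\<sigma> m)) s (F (\<sigma> m) s))) \<longlonglongrightarrow> 0"
    proof (rule LIMSEQ_I)
      fix e :: real assume e: "0 < e"
      define e' where "e' = e / (2 * (T - a))"
      have e': "e' > 0" using e aT by (simp add: e'_def)
      define C where "C = {K1..K2} \<times> {a..T} \<times> {-R..R}"
      have "uniformly_continuous_on C (\<lambda>z. H (fst z) (fst (snd z)) (snd (snd z)))"
        by (rule compact_uniformly_continuous[OF continuous_on_subset[OF Hc]])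
           (auto simp: C_def intro!: compact_Times)
      then obtain d where d: "d > 0" and dC: "\<And>z z'. z \<in> C \<Longrightarrow> z' \<in> C \<Longrightarrow> dist z' z < d \<Longrightarrow>
          dist (H (fst z') (fst (snd z')) (snd (snd z'))) (H (fst z) (fst (snd z)) (snd (snd z))) < e'"
        unfolding uniformly_continuous_on_def using e' by metis
      obtain N0 :: nat where N0: "(1 + B) * (T - a) / d < real N0" using reals_Archimedean2 by blast
      show "\<exists>no. \<forall>m\<ge>no. norm (F (\<sigma> m) t - u0 - integral {a..t} (\<lambda>s. H (Kn (\<sigma> m)) s (F (\<sigma> m) s)) - 0) < e"
      proof (intro exI allI impI)
        fix m assume m: "N0 \<le> m"
        define n where "n = \<sigma> m"
        have nN0: "N0 \<le> n" using m \<sigma>ge[of m] by (simp add: n_def)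
        have "(1 + B) * (T - a) < d * real N0" using N0 d by (simp add: divide_less_eq mult.commute)
        also have "\<dots> \<le> d * real (Suc n)" using nN0 d by (intro mult_left_mono) auto
        finally have small: "(1 + B) * \<delta> n < d"
          by (simp add: \<delta>_def divide_less_eq mult.commute mult.left_commute)
        have tkT: "a + real j * \<delta> n \<le> T" if "j \<le> Suc n" for j
        proof -
          have "real j * \<delta> n \<le> real (Suc n) * \<delta> n" using that \<delta>pos[of n] by (intro mult_right_mono) auto
          then show ?thesis using Tn[of n] by linarith
        qed
        have tka: "a \<le> a + real j * \<delta> n" for j using \<delta>pos[of n] by simp
        have err: "\<bar>eul_P H (Kn n) a (\<delta> n) u0 (Suc n) t - u0 - integral {a..t} (\<lambda>s. H (Kn n) s (eul_P H (Kn n) a (\<delta> n) u0 (Suc n) s))\<bar> \<le> e' * (t - a)"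
        proof (rule eul_err[OF \<delta>pos zero_less_Suc Hc less_imp_le[OF e']])
          show "a \<le> t" "t \<le> a + real (Suc n) * \<delta> n" using t Tn[of n] by auto
          fix j x assume j: "j < Suc n" and x1: "a + real j * \<delta> n < x" and x2: "x < a + real (Suc j) * \<delta> n"
          have "a + real j * \<delta> n \<le> a + real (Suc j) * \<delta> n" using \<delta>pos[of n] by simp
          note cc = eul_P_cell[OF \<delta>pos j order.refl this]
          have yj: "eul_y H (Kn n) a (\<delta> n) u0 j = F n (a + real j * \<delta> n)"
            by (simp add: F_def P_def cc)
          have xT: "x \<in> {a..T}" using x1 x2 tka[of j] tkT[of "Suc j"] j by auto
          have tjT: "a + real j * \<delta> n \<in> {a..T}" using tka[of j] tkT[of j] j by auto
          have z1: "(Kn n, a + real j * \<delta> n, F n (a + real j * \<delta> n)) \<in> C"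
            using Kn1[of n] Kn2[of n] tjT Fb[OF tjT, of n] by (auto simp: C_def)
          have z2: "(Kn n, x, F n x) \<in> C"
            using Kn1[of n] Kn2[of n] xT Fb[OF xT, of n] by (auto simp: C_def)
          have "dist (Kn n, x, F n x) (Kn n, a + real j * \<delta> n, F n (a + real j * \<delta> n))
              \<le> \<bar>x - (a + real j * \<delta> n)\<bar> + \<bar>F n x - F n (a + real j * \<delta> n)\<bar>"
            by (rule dist_triple_le)
          also have "\<bar>x - (a + real j * \<delta> n)\<bar> \<le> \<delta> n" using x1 x2 by (simp add: algebra_simps)
          also have "\<bar>F n x - F n (a + real j * \<delta> n)\<bar> \<le> B * (x - (a + real j * \<delta> n))"
            using Flip[of "a + real j * \<delta> n" x n] tka[of j] x1 xT by auto
          also have "B * (x - (a + real j * \<delta> n)) \<le> B * \<delta> n" using x2 B0 by (intro mult_left_mono) (auto simp: algebra_simps)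
          finally have "dist (Kn n, x, F n x) (Kn n, a + real j * \<delta> n, F n (a + real j * \<delta> n)) < d"
            using small by (simp add: algebra_simps)
          from dC[OF z1 z2 this]
          show "\<bar>H (Kn n) (a + real j * \<delta> n) (eul_y H (Kn n) a (\<delta> n) u0 j) - H (Kn n) x (eul_P H (Kn n) a (\<delta> n) u0 (Suc n) x)\<bar> \<le> e'"
            using yj by (simp add: dist_real_def F_def P_def abs_minus_commute)
        qed
        have "e' * (t - a) \<le> e' * (T - a)" using t e' by (intro mult_left_mono) auto
        also have "e' * (T - a) = e / 2" using aT by (simp add: e'_def field_simps)
        finally have "\<bar>F n t - u0 - integral {a..t} (\<lambda>s. H (Kn n) s (F n s))\<bar> \<le> e / 2"
          using err by (simp add: F_def P_def)
        then show "norm (F (\<sigma> m) t - u0 - integral {a..t} (\<lambda>s. H (Kn (\<sigma> m)) s (F (\<sigma> m) s)) - 0) < e"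
          using e by (simp add: n_def)
      qed
    qed
    have "(\<lambda>m. (F (\<sigma> m) t - u0 - integral {a..t} (\<lambda>s. H (Kn (\<sigma> m)) s (F (\<sigma> m) s))) + u0
        + integral {a..t} (\<lambda>s. H (Kn (\<sigma> m)) s (F (\<sigma> m) s))) \<longlonglongrightarrow> 0 + u0 + integral {a..t} (\<lambda>s. H K s (g s))"
      by (intro tendsto_add I1 I2 tendsto_const)
    then have "(\<lambda>m. F (\<sigma> m) t) \<longlonglongrightarrow> u0 + integral {a..t} (\<lambda>s. H K s (g s))" by simp
    then show ?thesis using FL[OF t] LIMSEQ_unique by blast
  qed
  show ?thesis using gc Kg inteq by blast
qed

lemma conf_iff:
  fixes t \<alpha> :: real
  assumes t: "t > 0"
  shows "has_conf_deriv \<alpha> h D S t \<longleftrightarrow> (h has_real_derivative D / t powr (1 - \<alpha>)) (at t within S)"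
proof -
  define c where "c = t powr (1 - \<alpha>)"
  have c: "c > 0" using t by (simp add: c_def)
  have "has_conf_deriv \<alpha> h D S t \<longleftrightarrow>
    (\<forall>e>0. \<exists>d>0. \<forall>x\<in>{\<epsilon>. t + \<epsilon> * c \<in> S}. 0 < dist x 0 \<and> dist x 0 < d \<longrightarrow>
        dist ((h (t + x * c) - h t) / x) D < e)"
    unfolding has_conf_deriv_def Lim_within c_def by simp
  also have "\<dots> \<longleftrightarrow> (\<forall>e>0. \<exists>d>0. \<forall>y\<in>S. 0 < dist y t \<and> dist y t < d \<longrightarrow>
        dist ((h y - h t) / (y - t)) (D / c) < e)"
  proof
    assume L: "\<forall>e>0. \<exists>d>0. \<forall>x\<in>{\<epsilon>. t + \<epsilon> * c \<in> S}. 0 < dist x 0 \<and> dist x 0 < d \<longrightarrow>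
        dist ((h (t + x * c) - h t) / x) D < e"
    show "\<forall>e>0. \<exists>d>0. \<forall>y\<in>S. 0 < dist y t \<and> dist y t < d \<longrightarrow>
        dist ((h y - h t) / (y - t)) (D / c) < e"
    proof (intro allI impI)
      fix e :: real assume e: "e > 0"
      obtain d where d: "d > 0" and dd: "\<forall>x\<in>{\<epsilon>. t + \<epsilon> * c \<in> S}. 0 < dist x 0 \<and> dist x 0 < d \<longrightarrow>
        dist ((h (t + x * c) - h t) / x) D < e * c" using L[rule_format, OF mult_pos_pos[OF e c]] by blast
      show "\<exists>d>0. \<forall>y\<in>S. 0 < dist y t \<and> dist y t < d \<longrightarrow>
        dist ((h y - h t) / (y - t)) (D / c) < e"
      proof (intro exI[of _ "d * c"] conjI ballI impI)
        show "d * c > 0" using d c by simp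
        fix y assume y: "y \<in> S" "0 < dist y t \<and> dist y t < d * c"
        define x where "x = (y - t) / c"
        have yx: "y = t + x * c" using c by (simp add: x_def)
        have x0: "x \<noteq> 0" using y by (auto simp: x_def dist_real_def)
        have xS: "x \<in> {\<epsilon>. t + \<epsilon> * c \<in> S}" using y yx by simp
        have "\<bar>x\<bar> = \<bar>y - t\<bar> / c" using c by (simp add: x_def abs_divide)
        then have "\<bar>x\<bar> < d" using y c by (simp add: dist_real_def divide_less_eq mult.commute)
        then have "dist ((h (t + x * c) - h t) / x) D < e * c"
          using dd xS x0 by (simp add: dist_real_def)
        moreover have "(h (t + x * c) - h t) / x - D = c * ((h y - h t) / (y - t) - D / c)"
          using c x0 yx by (simp add: field_simps)
        ultimately have "c * \<bar>(h y - h t) / (y - t) - D / c\<bar> < e * c"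
          by (simp add: dist_real_def abs_mult c less_imp_le)
        then show "dist ((h y - h t) / (y - t)) (D / c) < e"
          using c by (simp add: dist_real_def mult.commute)
      qed
    qed
  next
    assume L: "\<forall>e>0. \<exists>d>0. \<forall>y\<in>S. 0 < dist y t \<and> dist y t < d \<longrightarrow>
        dist ((h y - h t) / (y - t)) (D / c) < e"
    show "\<forall>e>0. \<exists>d>0. \<forall>x\<in>{\<epsilon>. t + \<epsilon> * c \<in> S}. 0 < dist x 0 \<and> dist x 0 < d \<longrightarrow>
        dist ((h (t + x * c) - h t) / x) D < e"
    proof (intro allI impI)
      fix e :: real assume e: "e > 0"
      obtain d where d: "d > 0" and dd: "\<forall>y\<in>S. 0 < dist y t \<and> dist y t < d \<longrightarrow>
        dist ((h y - h t) / (y - t)) (D / c) < e / c" using L[rule_format, OF divide_pos_pos[OF e c]] by blast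
      show "\<exists>d>0. \<forall>x\<in>{\<epsilon>. t + \<epsilon> * c \<in> S}. 0 < dist x 0 \<and> dist x 0 < d \<longrightarrow>
        dist ((h (t + x * c) - h t) / x) D < e"
      proof (intro exI[of _ "d / c"] conjI ballI impI)
        show "d / c > 0" using d c by simp
        fix x assume x: "x \<in> {\<epsilon>. t + \<epsilon> * c \<in> S}" "0 < dist x 0 \<and> dist x 0 < d / c"
        define y where "y = t + x * c"
        have x0: "x \<noteq> 0" using x by auto
        have "dist y t = \<bar>x\<bar> * c" using c by (simp add: y_def dist_real_def abs_mult)
        moreover have "\<bar>x\<bar> < d / c" using x by simp
        ultimately have "dist y t < d" using c by (simp add: less_divide_eq)
        moreover have "0 < dist y t" using x0 c by (simp add: y_def dist_real_def)
        ultimately have "dist ((h y - h t) / (y - t)) (D / c) < e / c" using dd x y_def by auto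
        moreover have "(h (t + x * c) - h t) / x - D = c * ((h y - h t) / (y - t) - D / c)"
          using c x0 y_def by (simp add: field_simps)
        ultimately have "\<bar>(h (t + x * c) - h t) / x - D\<bar> = c * \<bar>(h y - h t) / (y - t) - D / c\<bar>"
          and "\<bar>(h y - h t) / (y - t) - D / c\<bar> < e / c"
          using c by (simp_all add: dist_real_def abs_mult)
        then show "dist ((h (t + x * c) - h t) / x) D < e"
          using c by (simp add: dist_real_def less_divide_eq mult.commute)
      qed
    qed
  qed
  also have "\<dots> \<longleftrightarrow> (h has_real_derivative D / c) (at t within S)"
    unfolding has_field_derivative_iff Lim_within by simp
  finally show ?thesis by (simp add: c_def)
qed

lemma conf_deriv_eq:
  assumes aT: "a < T" and t: "t \<in> {a..T}" "t > 0" and h: "has_conf_deriv \<alpha> h D {a..T} t"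
  shows "conf_deriv \<alpha> {a..T} h t = D"
proof -
  define c where "c = t powr (1 - \<alpha>)"
  have c: "c > 0" using t by (simp add: c_def)
  have X: "{\<epsilon>. t + \<epsilon> * c \<in> {a..T}} = {(a - t) / c..(T - t) / c}"
    using c by (auto simp: divide_le_eq le_divide_eq algebra_simps)
  have lt: "(a - t) / c < (T - t) / c" using c aT by (simp add: divide_strict_right_mono)
  have "0 \<in> {(a - t) / c..(T - t) / c}" using t c by (auto simp: divide_le_eq le_divide_eq)
  then have lp: "0 islimpt {(a - t) / c..(T - t) / c}" using islimpt_Icc[OF lt] by simp
  have nt: "\<not> trivial_limit (at 0 within {\<epsilon>. t + \<epsilon> * c \<in> {a..T}})"
    unfolding X trivial_limit_within using lp by simp
  show ?thesis using h unfolding conf_deriv_def has_conf_deriv_def c_def[symmetric]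
    by (intro tendsto_Lim[OF nt])
qed

lemma conf_C_deriv:
  assumes aT: "a < T" and a: "0 < a" and C: "conf_C \<alpha> a T X h" and t: "t \<in> {a..T}"
  shows "(h has_real_derivative conf_deriv \<alpha> {a..T} h t / t powr (1 - \<alpha>)) (at t within {a..T})"
proof -
  have tp: "t > 0" using t a by auto
  obtain D where D: "has_conf_deriv \<alpha> h D {a..T} t" using C t unfolding conf_C_def by blast
  have "conf_deriv \<alpha> {a..T} h t = D" by (rule conf_deriv_eq[OF aT t tp D])
  then show ?thesis using D conf_iff[OF tp] by simp
qed

lemma conf_C_cont:
  assumes aT: "a < T" and a: "0 < a" and C: "conf_C \<alpha> a T X h"
  shows "continuous_on {a..T} h"
  unfolding continuous_on_eq_continuous_within
  using conf_C_deriv[OF aT a C] DERIV_continuous by blast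

lemma comp_lemma:
  fixes r :: "real \<Rightarrow> real"
  assumes at1: "a \<le> t1" and rc: "continuous_on {a..t1} r" and ra: "r a \<le> 0"
    and rd: "\<And>s. a < s \<Longrightarrow> s < t1 \<Longrightarrow> r s > 0 \<Longrightarrow> \<exists>y. (r has_real_derivative y) (at s) \<and> y \<le> 0"
  shows "r t1 \<le> 0"
proof (rule ccontr)
  assume "\<not> r t1 \<le> 0"
  then have r1: "r t1 > 0" by simp
  define S where "S = {s \<in> {a..t1}. r s \<le> 0}"
  have "closed S" unfolding S_def
    by (rule continuous_on_closed_Collect_le[OF rc continuous_on_const]) simp
  then have "compact S" unfolding S_def
    by (metis (no_types, lifting) compact_Icc compact_Int_closed inf.absorb_iff2 mem_Collect_eq subsetI)
  moreover have "a \<in> S" using at1 ra by (simp add: S_def)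
  ultimately obtain t0 where t0: "t0 \<in> S" and t0max: "\<And>s. s \<in> S \<Longrightarrow> s \<le> t0"
    using compact_attains_sup[of S] by blast
  have t0a: "a \<le> t0" "t0 \<le> t1" "r t0 \<le> 0" using t0 by (auto simp: S_def)
  have "t0 \<noteq> t1" using t0a r1 by auto
  have pos: "r s > 0" if "t0 < s" "s \<le> t1" for s
  proof (rule ccontr)
    assume "\<not> r s > 0"
    then have "s \<in> S" using that t0a by (auto simp: S_def)
    then show False using t0max[of s] that by auto
  qed
  have "r t0 \<ge> r t1"
  proof (rule DERIV_nonpos_imp_decreasing_open[of t0 t1 r])
    show "t0 \<le> t1" by (rule t0a(2))
    show "continuous_on {t0..t1} r" by (rule continuous_on_subset[OF rc]) (use t0a in auto)
    fix x assume "t0 < x" "x < t1"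
    then show "\<exists>y. (r has_real_derivative y) (at x) \<and> y \<le> 0"
      using rd pos t0a by auto
  qed
  then show False using t0a r1 by auto
qed

lemma int_pos:
  fixes g :: "real \<Rightarrow> real"
  assumes aT: "a < T" and gc: "continuous_on {a..T} g" and gp: "\<And>x. x \<in> {a..T} \<Longrightarrow> 0 < g x"
  shows "0 < integral {a..T} g"
proof -
  obtain x0 where x0: "x0 \<in> {a..T}" and mn: "\<And>x. x \<in> {a..T} \<Longrightarrow> g x0 \<le> g x"
    using continuous_attains_inf[OF compact_Icc _ gc] aT by fastforce
  have "integral {a..T} (\<lambda>_. g x0) \<le> integral {a..T} g"
    by (rule integral_le) (auto intro: integrable_continuous_interval gc mn)
  moreover have "integral {a..T} (\<lambda>_. g x0) = g x0 * (T - a)" using aT by simp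
  moreover have "g x0 * (T - a) > 0" using gp[OF x0] aT by simp
  ultimately show ?thesis by linarith
qed

lemma fcomp:
  fixes f :: "real \<Rightarrow> real \<Rightarrow> real" and y :: "real \<Rightarrow> real"
  assumes fc: "continuous_on ({a..T} \<times> UNIV) (\<lambda>(t, x). f t x)" and y: "continuous_on S y" and S: "S \<subseteq> {a..T}"
  shows "continuous_on S (\<lambda>x. f x (y x))"
proof -
  have "continuous_on S (\<lambda>x. (\<lambda>(t, x). f t x) (x, y x))"
    by (rule continuous_on_compose2[OF fc]) (use S in \<open>auto intro!: continuous_intros y\<close>)
  then show ?thesis by simp
qed

lemma bounded_on_Icc:
  fixes w :: "real \<Rightarrow> real" and a T :: real
  assumes "continuous_on {a..T} w"
  obtains R where "R \<ge> 0" "\<And>x. x \<in> {a..T} \<Longrightarrow> \<bar>w x\<bar> \<le> R"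
proof -
  have "bounded (w ` {a..T})" by (rule compact_imp_bounded[OF compact_continuous_image[OF assms compact_Icc]])
  then obtain R where R0: "\<forall>y\<in>w ` {a..T}. norm y \<le> R" unfolding bounded_iff by blast
  have R: "\<bar>w x\<bar> \<le> R" if "x \<in> {a..T}" for x using R0 that by auto
  show ?thesis by (rule that[of "max R 0"]) (use R in \<open>force+\<close>)
qed

lemma f_bounded:
  fixes f :: "real \<Rightarrow> real \<Rightarrow> real" and R :: real
  assumes fc: "continuous_on ({a..T} \<times> UNIV) (\<lambda>(t, x). f t x)"
  obtains F where "F \<ge> 0" "\<And>t x. t \<in> {a..T} \<Longrightarrow> \<bar>x\<bar> \<le> R \<Longrightarrow> \<bar>f t x\<bar> \<le> F"
proof -
  have "compact ({a..T} \<times> {-R..R})" by (intro compact_Times compact_Icc)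
  moreover have "continuous_on ({a..T} \<times> {-R..R}) (\<lambda>(t, x). f t x)"
    by (rule continuous_on_subset[OF fc]) auto
  ultimately have "bounded ((\<lambda>(t, x). f t x) ` ({a..T} \<times> {-R..R}))"
    by (intro compact_imp_bounded compact_continuous_image)
  then obtain F where F0: "\<forall>y\<in>(\<lambda>(t, x). f t x) ` ({a..T} \<times> {-R..R}). norm y \<le> F"
    unfolding bounded_iff by blast
  have F: "\<bar>(\<lambda>(t, x). f t x) p\<bar> \<le> F" if "p \<in> {a..T} \<times> {-R..R}" for p using F0 that by auto
  show ?thesis
  proof (rule that[of "max F 0"])
    fix t x assume "t \<in> {a..T}" "\<bar>x\<bar> \<le> R"
    then have "\<bar>f t x\<bar> \<le> F" using F[of "(t, x)"] by (auto simp: abs_le_iff)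
    then show "\<bar>f t x\<bar> \<le> max F 0" by simp
  qed simp
qed

lemma spike_seq:
  fixes f :: "real \<Rightarrow> real \<Rightarrow> real" and w :: "real \<Rightarrow> real" and a T s z :: real
  assumes aT: "a < T" and fc: "continuous_on ({a..T} \<times> UNIV) (\<lambda>(t, x). f t x)"
    and w: "continuous_on {a..T} w" and s: "s \<in> {a..T}"
  shows "\<exists>Y. (\<forall>n. continuous_on {a..T} (Y n) \<and> Y n s = z) \<and>
     (\<lambda>n. integral {a..T} (\<lambda>x. f x (Y n x))) \<longlonglongrightarrow> integral {a..T} (\<lambda>x. f x (w x))"
proof -
  define Y where "Y n x = w x + (z - w s) * max 0 (1 - real (Suc n) * \<bar>x - s\<bar>)" for n x
  have Yc: "continuous_on {a..T} (Y n)" for n unfolding Y_def by (intro continuous_intros w)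
  have Ys: "Y n s = z" for n by (simp add: Y_def)
  obtain Rw where Rw: "Rw \<ge> 0" "\<And>x. x \<in> {a..T} \<Longrightarrow> \<bar>w x\<bar> \<le> Rw" using bounded_on_Icc[OF w] by blast
  have Yb: "\<bar>Y n x\<bar> \<le> Rw + \<bar>z - w s\<bar>" if x: "x \<in> {a..T}" for n x
  proof -
    have m: "0 \<le> max 0 (1 - real (Suc n) * \<bar>x - s\<bar>)" "max 0 (1 - real (Suc n) * \<bar>x - s\<bar>) \<le> 1" by auto
    have "\<bar>(z - w s) * max 0 (1 - real (Suc n) * \<bar>x - s\<bar>)\<bar> \<le> \<bar>z - w s\<bar> * 1"
      unfolding abs_mult using m by (intro mult_left_mono) auto
    then show ?thesis using Rw(2)[OF x] unfolding Y_def by linarith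
  qed
  obtain Fb where Fb: "Fb \<ge> 0" "\<And>t x. t \<in> {a..T} \<Longrightarrow> \<bar>x\<bar> \<le> Rw + \<bar>z - w s\<bar> \<Longrightarrow> \<bar>f t x\<bar> \<le> Fb"
    using f_bounded[OF fc] by blast
  define gl where "gl x = (if x = s then f s z else f x (w x))" for x
  have lim: "(\<lambda>n. integral {a..T} (\<lambda>x. f x (Y n x))) \<longlonglongrightarrow> integral {a..T} gl"
  proof (rule dominated_convergence(2)[where h="\<lambda>_. Fb"])
    fix n show "(\<lambda>x. f x (Y n x)) integrable_on {a..T}"
      by (rule integrable_continuous_interval[OF fcomp[OF fc Yc]]) simp
  next
    show "(\<lambda>_. Fb) integrable_on {a..T}" by (rule integrable_continuous_interval[OF continuous_on_const])
  next
    fix n x assume "x \<in> {a..T}" then show "norm (f x (Y n x)) \<le> Fb" using Fb Yb by simp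
  next
    fix x assume x: "x \<in> {a..T}"
    show "(\<lambda>n. f x (Y n x)) \<longlonglongrightarrow> gl x"
    proof (cases "x = s")
      case True then show ?thesis by (simp add: gl_def Ys)
    next
      case False
      then have d: "\<bar>x - s\<bar> > 0" by simp
      obtain N :: nat where N: "1 / \<bar>x - s\<bar> < real N" using reals_Archimedean2 by blast
      have "eventually (\<lambda>n. f x (Y n x) = gl x) sequentially"
      proof (rule eventually_sequentiallyI[of N])
        fix n assume n: "N \<le> n"
        have "1 < real N * \<bar>x - s\<bar>" using N d by (simp add: divide_less_eq)
        also have "\<dots> \<le> real (Suc n) * \<bar>x - s\<bar>" using n d by (intro mult_right_mono) auto
        finally have "max 0 (1 - real (Suc n) * \<bar>x - s\<bar>) = 0" by simp
        then show "f x (Y n x) = gl x" using False by (simp add: Y_def gl_def)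
      qed
      then show ?thesis by (rule tendsto_eventually)
    qed
  qed
  have "integral {a..T} gl = integral {a..T} (\<lambda>x. f x (w x))"
    by (rule integral_spike[of "{s}"]) (auto simp: gl_def)
  then show ?thesis using lim Yc Ys by auto
qed

lemma Z_lemma:
  fixes f :: "real \<Rightarrow> real \<Rightarrow> real" and v M V Mc w :: "real \<Rightarrow> real" and lam a T s0 :: real
  assumes aT: "a < T" and lam: "0 < lam"
    and fc: "continuous_on ({a..T} \<times> UNIV) (\<lambda>(t, x). f t x)"
    and fpos: "\<forall>t\<in>{a..T}. \<forall>x. 0 < f t x"
    and vc: "continuous_on {a..T} v" and Mcont: "continuous_on {a..T} M"
    and Vc: "continuous_on {a..T} V" and Mcc: "continuous_on {a..T} Mc"
    and ti: "\<forall>t\<in>{a..T}. \<forall>y. continuous_on {a..T} y \<and> \<bar>y t - v t\<bar> = M t \<longrightarrow>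
        (y t - v t) * (thermistor_rhs lam f a T y t - V t) \<le> M t * Mc t"
    and tii: "\<forall>t\<in>{a..T}. M t = 0 \<longrightarrow> V t = thermistor_rhs lam f a T v t \<and> Mc t = 0"
    and s0: "s0 \<in> {a..T}" "M s0 = 0"
    and appr: "\<And>e. e > 0 \<Longrightarrow> \<exists>s\<in>{a..T}. M s > 0 \<and> \<bar>s - s0\<bar> < e"
    and w: "continuous_on {a..T} w"
  shows "integral {a..T} (\<lambda>x. f x (w x)) = integral {a..T} (\<lambda>x. f x (v x))"
proof -
  define J where "J = integral {a..T} (\<lambda>x. f x (w x))"
  define Iv where "Iv = integral {a..T} (\<lambda>x. f x (v x))"
  have J: "J > 0" unfolding J_def
    by (rule int_pos[OF aT fcomp[OF fc w order.refl]]) (use fpos in auto)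
  have Iv: "Iv > 0" unfolding Iv_def
    by (rule int_pos[OF aT fcomp[OF fc vc order.refl]]) (use fpos in auto)
  have ineq: "lam * f s (v s + \<epsilon> * M s) / J\<^sup>2 * \<epsilon> - V s * \<epsilon> \<le> Mc s"
    if s: "s \<in> {a..T}" "M s > 0" and eps: "\<epsilon> = 1 \<or> \<epsilon> = -1" for s \<epsilon>
  proof -
    define z where "z = v s + \<epsilon> * M s"
    obtain Y where Y: "\<And>n. continuous_on {a..T} (Y n)" "\<And>n. Y n s = z"
      and YL: "(\<lambda>n. integral {a..T} (\<lambda>x. f x (Y n x))) \<longlonglongrightarrow> J"
      using spike_seq[OF aT fc w s(1), of z] unfolding J_def by blast
    have each: "lam * f s z / (integral {a..T} (\<lambda>x. f x (Y n x)))\<^sup>2 * \<epsilon> - V s * \<epsilon> \<le> Mc s" for n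
    proof -
      have "\<bar>Y n s - v s\<bar> = M s" using Y(2) eps s by (auto simp: z_def)
      then have "(Y n s - v s) * (thermistor_rhs lam f a T (Y n) s - V s) \<le> M s * Mc s"
        using ti s Y(1) by blast
      then have "M s * (\<epsilon> * (thermistor_rhs lam f a T (Y n) s - V s)) \<le> M s * Mc s"
        using Y(2) by (simp add: z_def algebra_simps)
      then have "\<epsilon> * (thermistor_rhs lam f a T (Y n) s - V s) \<le> Mc s"
        using s(2) by (simp add: mult_le_cancel_left_pos)
      then show ?thesis using Y(2) by (simp add: thermistor_rhs_def algebra_simps)
    qed
    have "(\<lambda>n. lam * f s z / (integral {a..T} (\<lambda>x. f x (Y n x)))\<^sup>2 * \<epsilon> - V s * \<epsilon>) \<longlonglongrightarrow>
        lam * f s z / J\<^sup>2 * \<epsilon> - V s * \<epsilon>"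
      using J by (intro tendsto_intros YL) auto
    then have "lam * f s z / J\<^sup>2 * \<epsilon> - V s * \<epsilon> \<le> Mc s"
      by (rule LIMSEQ_le_const2) (use each in auto)
    then show ?thesis by (simp add: z_def)
  qed
  obtain sn where sn: "\<And>n. sn n \<in> {a..T}" "\<And>n. M (sn n) > 0" "\<And>n. \<bar>sn n - s0\<bar> < 1 / real (Suc n)"
  proof -
    have "\<forall>n. \<exists>s\<in>{a..T}. M s > 0 \<and> \<bar>s - s0\<bar> < 1 / real (Suc n)" using appr by simp
    then show ?thesis using that by metis
  qed
  have snL: "sn \<longlonglongrightarrow> s0"
  proof (rule LIMSEQ_I)
    fix r :: real assume r: "0 < r"
    obtain N :: nat where N: "1 / r < real N" using reals_Archimedean2 by blast
    show "\<exists>no. \<forall>n\<ge>no. norm (sn n - s0) < r"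
    proof (intro exI allI impI)
      fix n assume n: "N \<le> n"
      have "1 / r < real (Suc n)" using N n by linarith
      then have "1 / real (Suc n) < r" using r by (simp add: divide_less_eq mult.commute)
      then show "norm (sn n - s0) < r" using sn(3)[of n] by simp
    qed
  qed
  have lim_le: "lam * f s0 (v s0 + \<epsilon> * M s0) / J\<^sup>2 * \<epsilon> - V s0 * \<epsilon> - Mc s0 \<le> 0"
    if eps: "\<epsilon> = 1 \<or> \<epsilon> = -1" for \<epsilon>
  proof -
    have pc: "continuous_on {a..T} (\<lambda>s. lam * f s (v s + \<epsilon> * M s) / J\<^sup>2 * \<epsilon> - V s * \<epsilon> - Mc s)"
      using J by (intro continuous_intros fcomp[OF fc _ order.refl] vc Mcont Vc Mcc) auto
    have "(\<lambda>n. lam * f (sn n) (v (sn n) + \<epsilon> * M (sn n)) / J\<^sup>2 * \<epsilon> - V (sn n) * \<epsilon> - Mc (sn n)) \<longlonglongrightarrow>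
        lam * f s0 (v s0 + \<epsilon> * M s0) / J\<^sup>2 * \<epsilon> - V s0 * \<epsilon> - Mc s0"
      by (rule continuous_on_tendsto_compose[OF pc snL s0(1)]) (use sn(1) in auto)
    then show ?thesis
      by (rule LIMSEQ_le_const2) (use ineq[OF sn(1) sn(2) eps] in auto)
  qed
  have V0: "V s0 = lam * f s0 (v s0) / Iv\<^sup>2" "Mc s0 = 0"
    using tii s0 by (auto simp: thermistor_rhs_def Iv_def)
  have "lam * f s0 (v s0) / J\<^sup>2 \<le> lam * f s0 (v s0) / Iv\<^sup>2"
    using lim_le[of 1] V0 s0 by simp
  moreover have "lam * f s0 (v s0) / Iv\<^sup>2 \<le> lam * f s0 (v s0) / J\<^sup>2"
    using lim_le[of "-1"] V0 s0 by simp
  ultimately have eq: "lam * f s0 (v s0) / J\<^sup>2 = lam * f s0 (v s0) / Iv\<^sup>2" by linarith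
  have "lam * f s0 (v s0) > 0" using lam fpos s0 by simp
  then have "J = Iv" using eq J Iv by (auto simp: field_simps)
  then show ?thesis by (simp add: J_def Iv_def)
qed

lemma find_s0:
  fixes M :: "real \<Rightarrow> real"
  assumes Mc: "continuous_on {a..T} M" and M0: "\<And>t. t \<in> {a..T} \<Longrightarrow> 0 \<le> M t"
    and t: "t \<in> {a..T}" "M t = 0" and t2: "t2 \<in> {a..T}" "M t2 > 0"
  shows "\<exists>s0\<in>{a..T}. M s0 = 0 \<and> (\<forall>e>0. \<exists>s\<in>{a..T}. M s > 0 \<and> \<bar>s - s0\<bar> < e)"
proof (cases "t < t2")
  case True
  define S where "S = {s \<in> {t..t2}. M s \<le> 0}"
  have "closed S" unfolding S_def
    by (rule continuous_on_closed_Collect_le[OF continuous_on_subset[OF Mc] continuous_on_const]) (use t t2 in auto)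
  then have "compact S" unfolding S_def
    by (metis (no_types, lifting) compact_Icc compact_Int_closed inf.absorb_iff2 mem_Collect_eq subsetI)
  moreover have "t \<in> S" using t True by (simp add: S_def)
  ultimately obtain s0 where s0: "s0 \<in> S" and mx: "\<And>s. s \<in> S \<Longrightarrow> s \<le> s0"
    using compact_attains_sup[of S] by blast
  have s0i: "t \<le> s0" "s0 \<le> t2" "M s0 \<le> 0" using s0 by (auto simp: S_def)
  have s0T: "s0 \<in> {a..T}" using s0i t t2 by auto
  have M0s: "M s0 = 0" using M0[OF s0T] s0i by simp
  have "s0 < t2" using s0i t2 M0s by (cases "s0 = t2") auto
  have pos: "M s > 0" if "s0 < s" "s \<le> t2" for s
  proof (rule ccontr)
    assume "\<not> M s > 0"
    then have "s \<in> S" using that s0i by (auto simp: S_def)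
    then show False using mx[of s] that by auto
  qed
  have "\<forall>e>0. \<exists>s\<in>{a..T}. M s > 0 \<and> \<bar>s - s0\<bar> < e"
  proof (intro allI impI)
    fix e :: real assume e: "e > 0"
    define s where "s = min (s0 + e / 2) t2"
    have "s0 < s" "s \<le> t2" using e \<open>s0 < t2\<close> by (auto simp: s_def)
    moreover have "\<bar>s - s0\<bar> < e" using e \<open>s0 < s\<close> by (auto simp: s_def)
    moreover have "s \<in> {a..T}" using \<open>s0 < s\<close> \<open>s \<le> t2\<close> s0T t2 by auto
    ultimately show "\<exists>s\<in>{a..T}. M s > 0 \<and> \<bar>s - s0\<bar> < e" using pos by blast
  qed
  then show ?thesis using s0T M0s by blast
next
  case False
  then have tt2: "t2 < t" using t t2 by (cases "t = t2") auto
  define S where "S = {s \<in> {t2..t}. M s \<le> 0}"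
  have "closed S" unfolding S_def
    by (rule continuous_on_closed_Collect_le[OF continuous_on_subset[OF Mc] continuous_on_const]) (use t t2 in auto)
  then have "compact S" unfolding S_def
    by (metis (no_types, lifting) compact_Icc compact_Int_closed inf.absorb_iff2 mem_Collect_eq subsetI)
  moreover have "t \<in> S" using t tt2 by (simp add: S_def)
  ultimately obtain s0 where s0: "s0 \<in> S" and mn: "\<And>s. s \<in> S \<Longrightarrow> s0 \<le> s"
    using compact_attains_inf[of S] by blast
  have s0i: "t2 \<le> s0" "s0 \<le> t" "M s0 \<le> 0" using s0 by (auto simp: S_def)
  have s0T: "s0 \<in> {a..T}" using s0i t t2 by auto
  have M0s: "M s0 = 0" using M0[OF s0T] s0i by simp
  have "t2 < s0" using s0i t2 M0s by (cases "s0 = t2") auto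
  have pos: "M s > 0" if "s < s0" "t2 \<le> s" for s
  proof (rule ccontr)
    assume "\<not> M s > 0"
    then have "s \<in> S" using that s0i by (auto simp: S_def)
    then show False using mn[of s] that by auto
  qed
  have "\<forall>e>0. \<exists>s\<in>{a..T}. M s > 0 \<and> \<bar>s - s0\<bar> < e"
  proof (intro allI impI)
    fix e :: real assume e: "e > 0"
    define s where "s = max (s0 - e / 2) t2"
    have "s < s0" "t2 \<le> s" using e \<open>t2 < s0\<close> by (auto simp: s_def)
    moreover have "\<bar>s - s0\<bar> < e" using e \<open>s < s0\<close> by (auto simp: s_def)
    moreover have "s \<in> {a..T}" using \<open>s < s0\<close> \<open>t2 \<le> s\<close> s0T t2 by auto
    ultimately show "\<exists>s\<in>{a..T}. M s > 0 \<and> \<bar>s - s0\<bar> < e" using pos by blast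
  qed
  then show ?thesis using s0T M0s by blast
qed

theorem theorem18:
  fixes \<alpha> a T lam ua :: real and f :: "real \<Rightarrow> real \<Rightarrow> real"
    and v M :: "real \<Rightarrow> real"
  assumes "0 < \<alpha>" "\<alpha> < 1" "0 < a" "a < T" "0 < lam"
    and "continuous_on ({a..T} \<times> UNIV) (\<lambda>(t, x). f t x)"
    and "\<forall>t\<in>{a..T}. \<forall>x. 0 < f t x"
    and "tube_solution \<alpha> a T (thermistor_rhs lam f a T) ua v M"
  shows "\<exists>u. conf_C \<alpha> a T UNIV u \<and>
             (\<forall>t\<in>{a..T}. conf_deriv \<alpha> {a..T} u t = thermistor_rhs lam f a T u t) \<and>
             u a = ua \<and>
             (\<forall>t\<in>{a..T}. \<bar>u t - v t\<bar> \<le> M t)"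
proof -
  note a0 = assms(3) and aT = assms(4) and lam = assms(5) and fc = assms(6) and fpos = assms(7)
  have vC: "conf_C \<alpha> a T UNIV v" and MC: "conf_C \<alpha> a T {0..} M"
    and ti: "\<forall>t\<in>{a..T}. \<forall>y. continuous_on {a..T} y \<and> \<bar>y t - v t\<bar> = M t \<longrightarrow>
        (y t - v t) * (thermistor_rhs lam f a T y t - conf_deriv \<alpha> {a..T} v t)
          \<le> M t * conf_deriv \<alpha> {a..T} M t"
    and tii: "\<forall>t\<in>{a..T}. M t = 0 \<longrightarrow>
        conf_deriv \<alpha> {a..T} v t = thermistor_rhs lam f a T v t \<and> conf_deriv \<alpha> {a..T} M t = 0"
    and tiii: "\<bar>ua - v a\<bar> \<le> M a"
    using assms(8) unfolding tube_solution_def by blast+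
  define V where "V = conf_deriv \<alpha> {a..T} v"
  define Mc where "Mc = conf_deriv \<alpha> {a..T} M"
  define G where "G = thermistor_rhs lam f a T"
  have vc: "continuous_on {a..T} v" by (rule conf_C_cont[OF aT a0 vC])
  have Mcont: "continuous_on {a..T} M" by (rule conf_C_cont[OF aT a0 MC])
  have Vc: "continuous_on {a..T} V" using vC by (simp add: conf_C_def V_def)
  have Mcc: "continuous_on {a..T} Mc" using MC by (simp add: conf_C_def Mc_def)
  have M0: "0 \<le> M t" if "t \<in> {a..T}" for t using MC that by (auto simp: conf_C_def)
  have vd: "(v has_real_derivative V t / t powr (1 - \<alpha>)) (at t within {a..T})" if "t \<in> {a..T}" for t
    unfolding V_def by (rule conf_C_deriv[OF aT a0 vC that])
  have Md: "(M has_real_derivative Mc t / t powr (1 - \<alpha>)) (at t within {a..T})" if "t \<in> {a..T}" for t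
    unfolding Mc_def by (rule conf_C_deriv[OF aT a0 MC that])
  show ?thesis
  proof (cases "\<forall>t\<in>{a..T}. M t = 0")
    case True
    have "v a = ua" using tiii True aT by auto
    moreover have "\<forall>t\<in>{a..T}. conf_deriv \<alpha> {a..T} v t = thermistor_rhs lam f a T v t"
      using tii True by blast
    moreover have "\<forall>t\<in>{a..T}. \<bar>v t - v t\<bar> \<le> M t" using M0 by simp
    ultimately show ?thesis using vC by blast
  next
    case False
    then obtain t2 where t2: "t2 \<in> {a..T}" "M t2 > 0" using M0 by (metis order_le_less)
    have Zeq: "integral {a..T} (\<lambda>x. f x (w x)) = integral {a..T} (\<lambda>x. f x (v x))"
      if w: "continuous_on {a..T} w" and ex: "\<exists>t\<in>{a..T}. M t = 0" for w
    proof -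
      obtain t where t: "t \<in> {a..T}" "M t = 0" using ex by blast
      obtain s0 where s0: "s0 \<in> {a..T}" "M s0 = 0" and appr: "\<forall>e>0. \<exists>s\<in>{a..T}. M s > 0 \<and> \<bar>s - s0\<bar> < e"
        using find_s0[OF Mcont M0 t t2] by blast
      show ?thesis
        by (rule Z_lemma[OF aT lam fc fpos vc Mcont Vc Mcc _ _ s0 _ w])
           (use ti tii appr in \<open>auto simp: V_def Mc_def\<close>)
    qed
    define cl where "cl s = max a (min T s)" for s
    have cl: "cl s \<in> {a..T}" for s using aT by (auto simp: cl_def)
    have cl_id: "cl s = s" if "s \<in> {a..T}" for s using that by (auto simp: cl_def)
    have clc: "continuous_on UNIV cl" unfolding cl_def by (intro continuous_intros)
    have cl12: "a \<le> cl s" "cl s \<le> T" for s using cl[of s] by auto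
    have vcl: "continuous_on S (\<lambda>x. v (cl (p x)))" if "continuous_on S p" for S :: "real set" and p
      by (rule continuous_on_compose2[OF vc continuous_on_compose2[OF clc that]]) (auto simp: cl12)
    have Mcl: "continuous_on S (\<lambda>x. M (cl (p x)))" if "continuous_on S p" for S :: "real set" and p
      by (rule continuous_on_compose2[OF Mcont continuous_on_compose2[OF clc that]]) (auto simp: cl12)
    have vcl3: "continuous_on S (\<lambda>x. v (cl (p x)))" if "continuous_on S p" for S :: "(real \<times> real \<times> real) set" and p
      by (rule continuous_on_compose2[OF vc continuous_on_compose2[OF clc that]]) (auto simp: cl12)
    have Mcl3: "continuous_on S (\<lambda>x. M (cl (p x)))" if "continuous_on S p" for S :: "(real \<times> real \<times> real) set" and p
      by (rule continuous_on_compose2[OF Mcont continuous_on_compose2[OF clc that]]) (auto simp: cl12)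
    define pr where "pr s x = v (cl s) + max (- M (cl s)) (min (M (cl s)) (x - v (cl s)))" for s x
    have prc: "continuous_on S (\<lambda>x. pr (p x) (q x))" if "continuous_on S p" "continuous_on S q" for S :: "real set" and p q
      unfolding pr_def by (intro continuous_intros vcl Mcl that)
    have prc3: "continuous_on S (\<lambda>x. pr (p x) (q x))" if "continuous_on S p" "continuous_on S q" for S :: "(real \<times> real \<times> real) set" and p q
      unfolding pr_def by (intro continuous_intros vcl3 Mcl3 that)
    obtain Rv where Rv: "\<And>x. x \<in> {a..T} \<Longrightarrow> \<bar>v x\<bar> \<le> Rv" using bounded_on_Icc[OF vc] by blast
    obtain RM where RM: "\<And>x. x \<in> {a..T} \<Longrightarrow> \<bar>M x\<bar> \<le> RM" using bounded_on_Icc[OF Mcont] by blast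
    define R0 where "R0 = Rv + RM"
    have prb: "\<bar>pr s x\<bar> \<le> R0" for s x
    proof -
      have "0 \<le> M (cl s)" using M0[OF cl] .
      moreover have "\<bar>v (cl s)\<bar> \<le> Rv" "\<bar>M (cl s)\<bar> \<le> RM" using Rv[OF cl] RM[OF cl] by auto
      ultimately show ?thesis unfolding pr_def R0_def by (auto simp: abs_le_iff max_def min_def)
    qed
    have pr_id: "pr t x = x" if "t \<in> {a..T}" "\<bar>x - v t\<bar> \<le> M t" for t x
      using that by (auto simp: pr_def cl_id abs_le_iff max_def min_def)
    have pr_up: "pr t x = v t + M t" if "t \<in> {a..T}" "x - v t > M t" for t x
      using that M0[OF that(1)] by (auto simp: pr_def cl_id max_def min_def)
    have pr_lo: "pr t x = v t - M t" if "t \<in> {a..T}" "v t - x > M t" for t x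
      using that M0[OF that(1)] by (auto simp: pr_def cl_id max_def min_def)
    have prM: "pr t x = v t" if "t \<in> {a..T}" "M t = 0" for t x
      using that by (auto simp: pr_def cl_id max_def min_def)
    obtain Fm where Fm: "Fm \<ge> 0" "\<And>t x. t \<in> {a..T} \<Longrightarrow> \<bar>x\<bar> \<le> R0 \<Longrightarrow> \<bar>f t x\<bar> \<le> Fm"
      using f_bounded[OF fc] by blast
    obtain m where m: "m > 0" "\<And>t x. t \<in> {a..T} \<Longrightarrow> \<bar>x\<bar> \<le> R0 \<Longrightarrow> m \<le> f t x"
    proof -
      have R0p: "0 \<le> R0" using prb[of a 0] by simp
      have "\<exists>q\<in>{a..T} \<times> {-R0..R0}. \<forall>p\<in>{a..T} \<times> {-R0..R0}. (\<lambda>(t, x). f t x) q \<le> (\<lambda>(t, x). f t x) p"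
        by (rule continuous_attains_inf[OF compact_Times[OF compact_Icc compact_Icc]])
           (use aT R0p in \<open>auto intro: continuous_on_subset[OF fc]\<close>)
      then obtain t0 x0 where q: "t0 \<in> {a..T}" "x0 \<in> {-R0..R0}"
        and qm: "\<And>t x. t \<in> {a..T} \<Longrightarrow> x \<in> {-R0..R0} \<Longrightarrow> f t0 x0 \<le> f t x" by fastforce
      show ?thesis by (rule that[of "f t0 x0"]) (use fpos q qm in \<open>auto simp: abs_le_iff\<close>)
    qed

    have mFm: "m \<le> Fm" using m(2)[of a 0] Fm(2)[of a 0] aT prb[of a 0] by force
    define Ifn where "Ifn w = integral {a..T} (\<lambda>x. f x (w x))" for w
    define \<Psi> where "\<Psi> u = lam / (Ifn (\<lambda>x. pr x (u x)))\<^sup>2" for u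
    define K1 where "K1 = lam / (Fm * (T - a))\<^sup>2"
    define K2 where "K2 = lam / (m * (T - a))\<^sup>2"
    have prU: "continuous_on {a..T} (\<lambda>x. pr x (u x))" if "continuous_on {a..T} u" for u
      by (rule prc[OF continuous_on_id that])
    have fprU: "continuous_on {a..T} (\<lambda>x. f x (pr x (u x)))" if "continuous_on {a..T} u" for u
      by (rule fcomp[OF fc prU[OF that] order.refl])
    have Ibnd: "m * (T - a) \<le> Ifn (\<lambda>x. pr x (u x)) \<and> Ifn (\<lambda>x. pr x (u x)) \<le> Fm * (T - a)"
      if u: "continuous_on {a..T} u" for u
    proof -
      have "integral {a..T} (\<lambda>_. m) \<le> Ifn (\<lambda>x. pr x (u x))" unfolding Ifn_def
        by (rule integral_le) (auto intro!: integrable_continuous_interval fprU u m(2) prb)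
      moreover have "Ifn (\<lambda>x. pr x (u x)) \<le> integral {a..T} (\<lambda>_. Fm)" unfolding Ifn_def
      proof (rule integral_le)
        fix x assume "x \<in> {a..T}"
        then show "f x (pr x (u x)) \<le> Fm" using Fm(2)[of x "pr x (u x)"] prb by auto
      qed (auto intro!: integrable_continuous_interval fprU u)
      ultimately show ?thesis using aT by (simp add: mult.commute)
    qed
    have mT: "m * (T - a) > 0" using m aT by simp
    have \<Psi>r: "K1 \<le> \<Psi> u \<and> \<Psi> u \<le> K2" if u: "continuous_on {a..T} u" for u
    proof -
      note b = Ibnd[OF u]
      have p: "0 < Ifn (\<lambda>x. pr x (u x))" using b mT by linarith
      have FT: "0 < Fm * (T - a)" using b p by linarith
      have "(Ifn (\<lambda>x. pr x (u x)))\<^sup>2 \<le> (Fm * (T - a))\<^sup>2" using b p by (intro power_mono) auto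
      moreover have "(m * (T - a))\<^sup>2 \<le> (Ifn (\<lambda>x. pr x (u x)))\<^sup>2" using b mT by (intro power_mono) auto
      moreover have "0 < (Fm * (T - a))\<^sup>2 * (Ifn (\<lambda>x. pr x (u x)))\<^sup>2"
        by (rule mult_pos_pos[OF zero_less_power[OF FT] zero_less_power[OF p]])
      moreover have "0 < (Ifn (\<lambda>x. pr x (u x)))\<^sup>2 * (m * (T - a))\<^sup>2"
        by (rule mult_pos_pos[OF zero_less_power[OF p] zero_less_power[OF mT]])
      ultimately show ?thesis unfolding \<Psi>_def K1_def K2_def using lam
        by (auto intro: divide_left_mono)
    qed
    have \<Psi>c: "(\<lambda>n. \<Psi> (U n)) \<longlonglongrightarrow> \<Psi> u"
      if U: "\<And>n. continuous_on {a..T} (U n)" and u: "continuous_on {a..T} u"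
        and L: "\<And>x. x \<in> {a..T} \<Longrightarrow> (\<lambda>n. U n x) \<longlonglongrightarrow> u x" for U u
    proof -
      have "(\<lambda>n. Ifn (\<lambda>x. pr x (U n x))) \<longlonglongrightarrow> Ifn (\<lambda>x. pr x (u x))"
        unfolding Ifn_def
      proof (rule dominated_convergence(2)[where h="\<lambda>_. Fm"])
        fix n show "(\<lambda>x. f x (pr x (U n x))) integrable_on {a..T}"
          by (rule integrable_continuous_interval[OF fprU[OF U]])
      next
        show "(\<lambda>_. Fm) integrable_on {a..T}" by (rule integrable_continuous_interval[OF continuous_on_const])
      next
        fix n x assume "x \<in> {a..T}" then show "norm (f x (pr x (U n x))) \<le> Fm" using Fm(2) prb by simp
      next
        fix x assume x: "x \<in> {a..T}"
        have "(\<lambda>n. pr x (U n x)) \<longlonglongrightarrow> pr x (u x)" unfolding pr_def by (intro tendsto_intros L x)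
        then have "(\<lambda>n. (x, pr x (U n x))) \<longlonglongrightarrow> (x, pr x (u x))" by (intro tendsto_Pair tendsto_const)
        from continuous_on_tendsto_compose[OF fc this]
        show "(\<lambda>n. f x (pr x (U n x))) \<longlonglongrightarrow> f x (pr x (u x))" using x by simp
      qed
      moreover have "Ifn (\<lambda>x. pr x (u x)) \<noteq> 0" using Ibnd[OF u] mT by linarith
      ultimately show ?thesis unfolding \<Psi>_def by (intro tendsto_intros) auto
    qed
    define H where "H K s x = (1 / cl s powr (1 - \<alpha>)) * max K1 (min K2 K) * f (cl s) (pr s x)" for K s x
    have clpos: "cl s > 0" for s using cl12[of s] a0 by linarith
    have Hc: "continuous_on UNIV (\<lambda>z. H (fst z) (fst (snd z)) (snd (snd z)))"
    proof -
      have c1: "continuous_on UNIV (\<lambda>z::real \<times> real \<times> real. cl (fst (snd z)))"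
        by (rule continuous_on_compose2[OF clc]) (auto intro!: continuous_intros)
      have c3: "continuous_on UNIV (\<lambda>z::real \<times> real \<times> real. pr (fst (snd z)) (snd (snd z)))"
        by (rule prc3) (intro continuous_intros)+
      have "continuous_on UNIV (\<lambda>z::real \<times> real \<times> real. (\<lambda>(t, x). f t x) (cl (fst (snd z)), pr (fst (snd z)) (snd (snd z))))"
        by (rule continuous_on_compose2[OF fc continuous_on_Pair[OF c1 c3]]) (auto simp: cl12)
      then have c2: "continuous_on UNIV (\<lambda>z::real \<times> real \<times> real. f (cl (fst (snd z))) (pr (fst (snd z)) (snd (snd z))))"
        by simp
      show ?thesis unfolding H_def
        by (intro continuous_intros c1 c2) (use clpos in \<open>auto simp: less_imp_neq[symmetric]\<close>)
    qed
    define B where "B = (1 / a powr (1 - \<alpha>)) * K2 * Fm"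
    have K1p: "K1 > 0" unfolding K1_def using lam mT mFm m aT by (auto intro!: divide_pos_pos)
    have K12: "K1 \<le> K2" using \<Psi>r[of "\<lambda>_. 0"] by simp
    have Hb: "\<bar>H K s x\<bar> \<le> B" for K s x
    proof -
      have "a powr (1 - \<alpha>) \<le> cl s powr (1 - \<alpha>)" using cl12 a0 assms(2) by (intro powr_mono2) auto
      then have p1: "1 / cl s powr (1 - \<alpha>) \<le> 1 / a powr (1 - \<alpha>)" using a0 clpos[of s] by (intro divide_left_mono) auto
      have p2: "0 < 1 / cl s powr (1 - \<alpha>)" using clpos[of s] by simp
      have k: "0 < max K1 (min K2 K)" "max K1 (min K2 K) \<le> K2" using K1p K12 by auto
      have ff1: "0 < f (cl s) (pr s x)" using fpos cl[of s] by blast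
      have "\<bar>f (cl s) (pr s x)\<bar> \<le> Fm" by (rule Fm(2)[OF cl prb])
      then have ff2: "f (cl s) (pr s x) \<le> Fm" by simp
      note ff = ff1 ff2
      have "H K s x \<le> B" unfolding H_def B_def
        by (intro mult_mono p1 k ff) (use p2 k ff in auto)
      moreover have "0 \<le> H K s x" unfolding H_def using p2 k ff by simp
      ultimately show ?thesis by simp
    qed
    obtain u K where uc: "continuous_on {a..T} u" and K\<Psi>: "K = \<Psi> u"
      and ueq: "\<forall>t\<in>{a..T}. u t = ua + integral {a..t} (\<lambda>s. H K s (u s))"
    proof -
      note E = exist_nonlocal[where H=H and \<Psi>=\<Psi> and ?K1.0=K1 and ?K2.0=K2 and B=B and ?u0.0=ua and a=a and T=T]
      have "\<exists>u K. continuous_on {a..T} u \<and> K = \<Psi> u \<and> (\<forall>t\<in>{a..T}. u t = ua + integral {a..t} (\<lambda>s. H K s (u s)))"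
        by (rule E[OF aT Hc Hb \<Psi>r \<Psi>c])
      then show ?thesis using that by blast
    qed

    have Kb: "K1 \<le> K \<and> K \<le> K2" using \<Psi>r[OF uc] K\<Psi> by simp
    have clampK: "max K1 (min K2 K) = K" using Kb by simp
    define ut where "ut x = pr x (u x)" for x
    have utc: "continuous_on {a..T} ut" unfolding ut_def by (rule prU[OF uc])
    have KG: "K * f t (ut t) = G ut t" for t
      unfolding G_def thermistor_rhs_def K\<Psi> \<Psi>_def Ifn_def ut_def by simp
    have hc: "continuous_on {a..T} (\<lambda>s. H K s (u s))"
      by (rule comp3_cont[OF Hc]) (auto intro!: continuous_intros uc)
    have ud: "(u has_real_derivative H K t (u t)) (at t within {a..T})" if t: "t \<in> {a..T}" for t
    proof -
      have "((\<lambda>x. ua + integral {a..x} (\<lambda>s. H K s (u s))) has_real_derivative 0 + H K t (u t)) (at t within {a..T})"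
        by (rule DERIV_add[OF DERIV_const integral_has_real_derivative[OF hc t]])
      then have "((\<lambda>x. ua + integral {a..x} (\<lambda>s. H K s (u s))) has_real_derivative H K t (u t)) (at t within {a..T})"
        by simp
      then show ?thesis
        by (rule has_field_derivative_transform_within[OF _ zero_less_one t]) (use ueq in auto)
    qed
    have Hval: "H K t (u t) = G ut t / t powr (1 - \<alpha>)" if "t \<in> {a..T}" for t
      using that KG[of t] by (simp add: H_def cl_id clampK ut_def)
    have uA: "u a = ua" using ueq aT by simp
    have ZG: "G ut t = V t \<and> Mc t = 0" if t: "t \<in> {a..T}" and Mt: "M t = 0" for t
    proof -
      have "Ifn ut = Ifn v" unfolding Ifn_def by (rule Zeq[OF utc]) (use t Mt in blast)
      moreover have "ut t = v t" using prM[OF t Mt] by (simp add: ut_def)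
      ultimately have "G ut t = G v t" by (simp add: G_def thermistor_rhs_def Ifn_def)
      then show ?thesis using tii t Mt by (simp add: V_def Mc_def G_def)
    qed
    have key_up: "G ut t - V t \<le> Mc t" if t: "t \<in> {a..T}" and gt: "u t - v t > M t" for t
    proof (cases "M t = 0")
      case True then show ?thesis using ZG[OF t True] by simp
    next
      case False
      then have Mp: "M t > 0" using M0[OF t] by simp
      have utv: "ut t = v t + M t" using pr_up[OF t gt] by (simp add: ut_def)
      then have "\<bar>ut t - v t\<bar> = M t" using Mp by simp
      then have "(ut t - v t) * (G ut t - V t) \<le> M t * Mc t"
        using ti t utc by (simp add: G_def V_def Mc_def)
      then have "M t * (G ut t - V t) \<le> M t * Mc t" using utv by simp
      then show ?thesis using Mp by (simp add: mult_le_cancel_left_pos)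
    qed
    have key_lo: "V t - G ut t \<le> Mc t" if t: "t \<in> {a..T}" and gt: "v t - u t > M t" for t
    proof (cases "M t = 0")
      case True then show ?thesis using ZG[OF t True] by simp
    next
      case False
      then have Mp: "M t > 0" using M0[OF t] by simp
      have utv: "ut t = v t - M t" using pr_lo[OF t gt] by (simp add: ut_def)
      then have "\<bar>ut t - v t\<bar> = M t" using Mp by simp
      then have "(ut t - v t) * (G ut t - V t) \<le> M t * Mc t"
        using ti t utc by (simp add: G_def V_def Mc_def)
      then have "M t * (V t - G ut t) \<le> M t * Mc t" using utv by (simp add: algebra_simps)
      then show ?thesis using Mp by (simp add: mult_le_cancel_left_pos)
    qed
    have cpos: "t powr (1 - \<alpha>) > 0" if "t \<in> {a..T}" for t using that a0 by simp
    have up: "u t - v t - M t \<le> 0" if t: "t \<in> {a..T}" for t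
    proof (rule comp_lemma[of a t "\<lambda>t. u t - v t - M t"])
      show "a \<le> t" using t by simp
      show "continuous_on {a..t} (\<lambda>t. u t - v t - M t)"
        by (intro continuous_on_diff continuous_on_subset[OF uc] continuous_on_subset[OF vc]
             continuous_on_subset[OF Mcont]) (use t in auto)
      show "u a - v a - M a \<le> 0" using tiii uA by (simp add: abs_le_iff)
      fix s assume s: "a < s" "s < t" "u s - v s - M s > 0"
      have sT: "s \<in> {a..T}" using s t by auto
      have "((\<lambda>t. u t - v t - M t) has_real_derivative (G ut s / s powr (1 - \<alpha>) - V s / s powr (1 - \<alpha>) - Mc s / s powr (1 - \<alpha>))) (at s within {a..T})"
        using DERIV_diff[OF DERIV_diff[OF ud[OF sT] vd[OF sT]] Md[OF sT]] Hval[OF sT] by simp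
      moreover have "at s within {a..T} = at s" using s t by (intro at_within_Icc_at) auto
      moreover have "G ut s / s powr (1 - \<alpha>) - V s / s powr (1 - \<alpha>) - Mc s / s powr (1 - \<alpha>) =
          (G ut s - V s - Mc s) / s powr (1 - \<alpha>)" by (simp add: diff_divide_distrib)
      moreover have "(G ut s - V s - Mc s) / s powr (1 - \<alpha>) \<le> 0"
        using key_up[OF sT] s cpos[OF sT] by (intro divide_nonpos_pos) auto
      ultimately show "\<exists>y. ((\<lambda>t. u t - v t - M t) has_real_derivative y) (at s) \<and> y \<le> 0" by auto
    qed
    have lo: "v t - u t - M t \<le> 0" if t: "t \<in> {a..T}" for t
    proof (rule comp_lemma[of a t "\<lambda>t. v t - u t - M t"])
      show "a \<le> t" using t by simp
      show "continuous_on {a..t} (\<lambda>t. v t - u t - M t)"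
        by (intro continuous_on_diff continuous_on_subset[OF uc] continuous_on_subset[OF vc]
             continuous_on_subset[OF Mcont]) (use t in auto)
      show "v a - u a - M a \<le> 0" using tiii uA by (simp add: abs_le_iff)
      fix s assume s: "a < s" "s < t" "v s - u s - M s > 0"
      have sT: "s \<in> {a..T}" using s t by auto
      have "((\<lambda>t. v t - u t - M t) has_real_derivative (V s / s powr (1 - \<alpha>) - G ut s / s powr (1 - \<alpha>) - Mc s / s powr (1 - \<alpha>))) (at s within {a..T})"
        using DERIV_diff[OF DERIV_diff[OF vd[OF sT] ud[OF sT]] Md[OF sT]] Hval[OF sT] by simp
      moreover have "at s within {a..T} = at s" using s t by (intro at_within_Icc_at) auto
      moreover have "V s / s powr (1 - \<alpha>) - G ut s / s powr (1 - \<alpha>) - Mc s / s powr (1 - \<alpha>) =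
          (V s - G ut s - Mc s) / s powr (1 - \<alpha>)" by (simp add: diff_divide_distrib)
      moreover have "(V s - G ut s - Mc s) / s powr (1 - \<alpha>) \<le> 0"
        using key_lo[OF sT] s cpos[OF sT] by (intro divide_nonpos_pos) auto
      ultimately show "\<exists>y. ((\<lambda>t. v t - u t - M t) has_real_derivative y) (at s) \<and> y \<le> 0" by auto
    qed
    have tube: "\<bar>u t - v t\<bar> \<le> M t" if "t \<in> {a..T}" for t using up[OF that] lo[OF that] by linarith
    have ut_eq: "ut t = u t" if "t \<in> {a..T}" for t using pr_id[OF that tube[OF that]] by (simp add: ut_def)
    have Gu: "G ut t = G u t" if "t \<in> {a..T}" for t
    proof -
      have "integral {a..T} (\<lambda>x. f x (ut x)) = integral {a..T} (\<lambda>x. f x (u x))"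
        by (rule integral_cong) (simp add: ut_eq)
      then show ?thesis using ut_eq[OF that] by (simp add: G_def thermistor_rhs_def)
    qed
    have hcd: "has_conf_deriv \<alpha> u (G u t) {a..T} t" if t: "t \<in> {a..T}" for t
    proof -
      have "(u has_real_derivative G u t / t powr (1 - \<alpha>)) (at t within {a..T})"
        using ud[OF t] Hval[OF t] Gu[OF t] by simp
      moreover have tp: "0 < t" using t a0 by simp
      ultimately show ?thesis using conf_iff[OF tp, of \<alpha> u "G u t" "{a..T}"] cpos[OF t] by simp
    qed
    have cd: "conf_deriv \<alpha> {a..T} u t = G u t" if t: "t \<in> {a..T}" for t
      by (rule conf_deriv_eq[OF aT t _ hcd[OF t]]) (use t a0 in auto)
    have Iu: "integral {a..T} (\<lambda>x. f x (u x)) > 0"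
      by (rule int_pos[OF aT fcomp[OF fc uc order.refl]]) (use fpos in auto)
    have Guc: "continuous_on {a..T} (\<lambda>t. G u t)"
      unfolding G_def thermistor_rhs_def using Iu by (intro continuous_intros fcomp[OF fc uc order.refl]) auto
    have "conf_C \<alpha> a T UNIV u"
      unfolding conf_C_def
    proof (intro conjI ballI)
      show "continuous_on {a..T} (conf_deriv \<alpha> {a..T} u)"
        by (rule continuous_on_eq[OF Guc]) (simp add: cd)
    qed (use hcd in auto)
    then show ?thesis using cd uA tube unfolding G_def by blast
  qed
qed

end
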